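(* Let $\alpha\in\mathbb{F}_q^*$ and let $g(x)=\sum_{i=0}^ka_ix^i\in\mathbb{F}_q[x;\theta]$, with $a_k=1$ and $k\ge1$, be a right divisor of $x^n-\alpha$. Let $T_g$ be the $k\times k$ companion matrix of $g$, i.e. $(T_g)_{i,i+1}=1$ for $1\le i\le k-1$, the last row of $T_g$ is $(-a_0,-a_1,\dots,-a_{k-1})$, and all other entries are $0$. Let $P=(1,0,\dots,0)\in\mathbb{F}_q^k$ and $\tau=\Theta\circ T_g$. Then a linear code $\mathscr{C}\subseteq\mathbb{F}_q^n$ is the skew $\alpha$-cyclic $[n,n-k]$-code with generator polynomial $g(x)$ if and only if $\mathscr{C}$ is the code with parity check matrix $$[\,{}^tP,\ {}^t(P\tau),\ {}^t(P\tau^2),\ \dots,\ {}^t(P\tau^{n-1})\,].$$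
   Context: Let $\mathbb{F}_q$ be a finite field, $\theta$ a field automorphism of $\mathbb{F}_q$, and $\mathbb{F}_q[x;\theta]$ the skew polynomial ring with $xa=\theta(a)x$. A linear code $\mathscr{C}\subseteq\mathbb{F}_q^n$ is skew $\alpha$-cyclic if it is invariant under $(c_0,\dots,c_{n-1})\mapsto(\alpha\theta(c_{n-1}),\theta(c_0),\dots,\theta(c_{n-2}))$. Identifying $(a_0,\dots,a_{n-1})$ with the class of $\sum a_ix^i$ in the left module $\mathbb{F}_q[x;\theta]/\mathbb{F}_q[x;\theta](x^n-\alpha)$, the skew $\alpha$-cyclic code with generator polynomial $g$ (a monic right divisor of $x^n-\alpha$) is the left submodule generated by $g$; it has dimension $n-\deg g$. Vectors are row vectors, ${}^tv$ denotes the transpose, and $P\tau:=\Theta(P)T_g$ where $\Theta$ applies $\theta$ coordinatewise; $\tau^i$ is the $i$-fold iterate. The code with parity check matrix $H$ is $\{\vec c:\vec c\,{}^tH=0\}$. *)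

theory Defs
  imports "HOL-Computational_Algebra.Polynomial"
begin

text \<open>Skew polynomials in F_q[x;theta] are represented by their coefficient
  polynomials (type 'a poly); only the multiplication differs:
  (a x^i)(b x^j) = a theta^i(b) x^(i+j).\<close>

definition field_automorphism :: "('a::field \<Rightarrow> 'a) \<Rightarrow> bool" where
  "field_automorphism \<theta> \<longleftrightarrow> bij \<theta> \<and> (\<forall>a b. \<theta> (a + b) = \<theta> a + \<theta> b)
     \<and> (\<forall>a b. \<theta> (a * b) = \<theta> a * \<theta> b) \<and> \<theta> 1 = 1"

definition skew_mult :: "('a::field \<Rightarrow> 'a) \<Rightarrow> 'a poly \<Rightarrow> 'a poly \<Rightarrow> 'a poly" where
  "skew_mult \<theta> p q =
     (\<Sum>i\<le>degree p. \<Sum>j\<le>degree q. monom (coeff p i * (\<theta> ^^ i) (coeff q j)) (i + j))"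

definition xn_minus :: "nat \<Rightarrow> 'a::field \<Rightarrow> 'a poly" where
  "xn_minus n \<alpha> = monom 1 n - [:\<alpha>:]"

definition right_divides :: "('a::field \<Rightarrow> 'a) \<Rightarrow> 'a poly \<Rightarrow> 'a poly \<Rightarrow> bool" where
  "right_divides \<theta> g f \<longleftrightarrow> (\<exists>h. f = skew_mult \<theta> h g)"

definition vec_to_poly :: "'a::field list \<Rightarrow> 'a poly" where
  "vec_to_poly c = (\<Sum>i<length c. monom (c ! i) i)"

definition linear_code :: "nat \<Rightarrow> 'a::field list set \<Rightarrow> bool" where
  "linear_code n C \<longleftrightarrow> C \<subseteq> {v. length v = n} \<and> replicate n 0 \<in> C
     \<and> (\<forall>u\<in>C. \<forall>v\<in>C. map2 (+) u v \<in> C) \<and> (\<forall>a. \<forall>u\<in>C. map ((*) a) u \<in> C)"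

text \<open>The skew alpha-cyclic code with generator g: vectors whose class in
  F_q[x;theta]/F_q[x;theta](x^n - alpha) lies in the left submodule generated by g.\<close>
definition skew_cyclic_code :: "('a::field \<Rightarrow> 'a) \<Rightarrow> nat \<Rightarrow> 'a \<Rightarrow> 'a poly \<Rightarrow> 'a list set" where
  "skew_cyclic_code \<theta> n \<alpha> g = {c. length c = n \<and>
     (\<exists>h q. vec_to_poly c = skew_mult \<theta> h g + skew_mult \<theta> q (xn_minus n \<alpha>))}"

text \<open>Companion matrix T_g (k x k, indices 0..k-1), k = degree g.\<close>
definition companion :: "'a::field poly \<Rightarrow> nat \<Rightarrow> nat \<Rightarrow> 'a" where
  "companion g i j = (let k = degree g in
     if i + 1 < k then (if j = i + 1 then 1 else 0)
     else if i + 1 = k \<and> j < k then - coeff g j else 0)"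

definition vec_mat :: "nat \<Rightarrow> (nat \<Rightarrow> 'a::field) \<Rightarrow> (nat \<Rightarrow> nat \<Rightarrow> 'a) \<Rightarrow> nat \<Rightarrow> 'a" where
  "vec_mat k v M = (\<lambda>j. \<Sum>i<k. v i * M i j)"

definition tau :: "('a::field \<Rightarrow> 'a) \<Rightarrow> 'a poly \<Rightarrow> (nat \<Rightarrow> 'a) \<Rightarrow> nat \<Rightarrow> 'a" where
  "tau \<theta> g P = vec_mat (degree g) (\<theta> \<circ> P) (companion g)"

definition P0 :: "nat \<Rightarrow> 'a::field" where
  "P0 = (\<lambda>i. if i = 0 then 1 else 0)"

definition parity_matrix :: "('a::field \<Rightarrow> 'a) \<Rightarrow> 'a poly \<Rightarrow> nat \<Rightarrow> nat \<Rightarrow> 'a" where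
  "parity_matrix \<theta> g r i = ((tau \<theta> g ^^ i) P0) r"

definition code_of_parity :: "nat \<Rightarrow> nat \<Rightarrow> (nat \<Rightarrow> nat \<Rightarrow> 'a::field) \<Rightarrow> 'a list set" where
  "code_of_parity n k H = {c. length c = n \<and> (\<forall>r<k. (\<Sum>i<n. c ! i * H r i) = 0)}"

end

theory Submission imports Defs begin

lemma sum_ext0:
  fixes f :: "nat \<Rightarrow> 'b::comm_monoid_add" and N M :: nat
  assumes "\<forall>i\<ge>N. f i = 0" "\<forall>i\<ge>M. f i = 0"
  shows "sum f {..<N} = sum f {..<M}"
proof -
  have a: "sum f {..<K} = sum f {..<L}" if "\<forall>i\<ge>K. f i = 0" "K \<le> L" for K L :: nat
    using that leI by (auto intro!: sum.mono_neutral_left)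
  show ?thesis using a[of N "max N M"] a[of M "max N M"] assms by simp
qed

context
  fixes \<theta> :: "'a::field \<Rightarrow> 'a"
  assumes aut: "field_automorphism \<theta>"
begin

lemma th_add: "\<theta> (a + b) = \<theta> a + \<theta> b" using aut by (simp add: field_automorphism_def)
lemma th_mult: "\<theta> (a * b) = \<theta> a * \<theta> b" using aut by (simp add: field_automorphism_def)
lemma th_1: "\<theta> 1 = 1" using aut by (simp add: field_automorphism_def)
lemma th_0: "\<theta> 0 = 0"
  using th_add[of 0 0] by (metis add_cancel_right_right add_0)
lemma th_sum: "\<theta> (sum f A) = (\<Sum>i\<in>A. \<theta> (f i))"
  by (induct A rule: infinite_finite_induct) (auto simp: th_0 th_add)

lemma thp_0: "(\<theta>^^m) 0 = 0" by (induct m) (auto simp: th_0)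
lemma thp_1: "(\<theta>^^m) 1 = 1" by (induct m) (auto simp: th_1)
lemma thp_mult: "(\<theta>^^m) (a*b) = (\<theta>^^m) a * (\<theta>^^m) b" by (induct m) (auto simp: th_mult)

lemma tau_lin:
  assumes "finite A"
  shows "tau \<theta> g (\<lambda>r. \<Sum>i\<in>A. c i * f i r) = (\<lambda>r. \<Sum>i\<in>A. \<theta> (c i) * tau \<theta> g (f i) r)"
proof
  fix j
  have "tau \<theta> g (\<lambda>r. \<Sum>i\<in>A. c i * f i r) j
      = (\<Sum>l<degree g. (\<Sum>i\<in>A. \<theta> (c i) * \<theta> (f i l)) * companion g l j)"
    by (simp add: tau_def vec_mat_def th_sum th_mult)
  also have "\<dots> = (\<Sum>l<degree g. \<Sum>i\<in>A. \<theta> (c i) * (\<theta> (f i l) * companion g l j))"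
    by (simp add: sum_distrib_right mult.assoc)
  also have "\<dots> = (\<Sum>i\<in>A. \<Sum>l<degree g. \<theta> (c i) * (\<theta> (f i l) * companion g l j))"
    by (rule sum.swap)
  also have "\<dots> = (\<Sum>i\<in>A. \<theta> (c i) * tau \<theta> g (f i) j)"
    by (simp add: tau_def vec_mat_def sum_distrib_left)
  finally show "tau \<theta> g (\<lambda>r. \<Sum>i\<in>A. c i * f i r) j = (\<Sum>i\<in>A. \<theta> (c i) * tau \<theta> g (f i) j)" .
qed

lemma taupow_lin:
  assumes "finite A"
  shows "(tau \<theta> g ^^ m) (\<lambda>r. \<Sum>i\<in>A. c i * f i r) = (\<lambda>r. \<Sum>i\<in>A. (\<theta>^^m) (c i) * (tau \<theta> g ^^ m) (f i) r)"
proof (induct m)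
  case 0 then show ?case by simp
next
  case (Suc m)
  show ?case by (simp add: Suc tau_lin[OF assms])
qed

lemma taupow_zero: "(tau \<theta> g ^^ m) (\<lambda>r. 0) = (\<lambda>r. 0)"
  using taupow_lin[of "{}" m g] by simp

definition Rv :: "'a poly \<Rightarrow> 'a poly \<Rightarrow> nat \<Rightarrow> 'a" where
  "Rv g p r = (\<Sum>i<Suc (degree p). coeff p i * (tau \<theta> g ^^ i) P0 r)"

lemma R_gen:
  assumes "\<forall>i\<ge>N. coeff p i = 0"
  shows "Rv g p r = (\<Sum>i<N. coeff p i * (tau \<theta> g ^^ i) P0 r)"
  unfolding Rv_def by (rule sum_ext0) (use assms in \<open>auto intro: coeff_eq_0\<close>)

lemma R_add: "Rv g (p + q) r = Rv g p r + Rv g q r"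
proof -
  define N where "N = Suc (max (degree p) (degree q))"
  have b: "\<forall>i\<ge>N. coeff x i = 0" if "degree x < N" for x using that by (auto intro: coeff_eq_0)
  have "degree (p+q) < N" using degree_add_le_max[of p q] unfolding N_def by simp
  then show ?thesis
    by (simp add: R_gen[OF b] b N_def sum.distrib distrib_right)
qed

lemma R_zero: "Rv g 0 r = 0" by (simp add: Rv_def)

lemma R_sum: "Rv g (\<Sum>i\<in>A. p i) r = (\<Sum>i\<in>A. Rv g (p i) r)"
  by (induct A rule: infinite_finite_induct) (auto simp: R_zero R_add)

lemma R_monom: "Rv g (monom b l) r = b * (tau \<theta> g ^^ l) P0 r"
proof -
  have "Rv g (monom b l) r = (\<Sum>i<Suc l. coeff (monom b l) i * (tau \<theta> g ^^ i) P0 r)"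
    by (rule R_gen) auto
  then show ?thesis by (simp add: if_distrib cong: if_cong)
qed


lemma cz: "Suc (degree p) \<le> i \<Longrightarrow> coeff p i = 0" by (simp add: coeff_eq_0)

lemma skew_gen:
  assumes "\<forall>i\<ge>N. coeff p i = 0" "\<forall>j\<ge>M. coeff q j = 0"
  shows "skew_mult \<theta> p q = (\<Sum>i<N. \<Sum>j<M. monom (coeff p i * (\<theta>^^i) (coeff q j)) (i+j))"
proof -
  have "skew_mult \<theta> p q = (\<Sum>i<Suc (degree p). \<Sum>j<Suc (degree q). monom (coeff p i * (\<theta>^^i) (coeff q j)) (i+j))"
    by (simp add: skew_mult_def lessThan_Suc_atMost)
  also have "\<dots> = (\<Sum>i<Suc (degree p). \<Sum>j<M. monom (coeff p i * (\<theta>^^i) (coeff q j)) (i+j))"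
    by (rule sum.cong[OF refl], rule sum_ext0) (use assms in \<open>auto simp: coeff_eq_0 thp_0\<close>)
  also have "\<dots> = (\<Sum>i<N. \<Sum>j<M. monom (coeff p i * (\<theta>^^i) (coeff q j)) (i+j))"
    by (rule sum_ext0) (use assms in \<open>auto simp: cz thp_0\<close>)
  finally show ?thesis .
qed

lemma skew_zero: "skew_mult \<theta> 0 q = 0" by (simp add: skew_mult_def)

lemma skew_add_left: "skew_mult \<theta> (p1 + p2) q = skew_mult \<theta> p1 q + skew_mult \<theta> p2 q"
proof -
  define N where "N = Suc (max (degree p1) (degree p2))"
  have b: "\<forall>i\<ge>N. coeff x i = 0" if "degree x < N" for x using that by (auto intro: coeff_eq_0)
  have "degree (p1+p2) < N" using degree_add_le_max[of p1 p2] unfolding N_def by simp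
  then have e: "skew_mult \<theta> (p1+p2) q = (\<Sum>i<N. \<Sum>j<Suc (degree q). monom (coeff (p1+p2) i * (\<theta>^^i) (coeff q j)) (i+j))"
    by (intro skew_gen) (auto simp: coeff_eq_0 N_def)
  have e1: "skew_mult \<theta> p1 q = (\<Sum>i<N. \<Sum>j<Suc (degree q). monom (coeff p1 i * (\<theta>^^i) (coeff q j)) (i+j))"
    by (intro skew_gen) (auto simp: coeff_eq_0 N_def)
  have e2: "skew_mult \<theta> p2 q = (\<Sum>i<N. \<Sum>j<Suc (degree q). monom (coeff p2 i * (\<theta>^^i) (coeff q j)) (i+j))"
    by (intro skew_gen) (auto simp: coeff_eq_0 N_def)
  show ?thesis unfolding e e1 e2
    by (simp only: coeff_add distrib_right add_monom[symmetric] sum.distrib)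
qed

lemma R_mult: "Rv g (skew_mult \<theta> h f) r = (\<Sum>i<Suc (degree h). coeff h i * (tau \<theta> g ^^ i) (Rv g f) r)"
proof -
  define N where "N = Suc (degree h)"
  define M where "M = Suc (degree f)"
  have "Rv g (skew_mult \<theta> h f) r = (\<Sum>i<N. \<Sum>j<M. coeff h i * (\<theta>^^i) (coeff f j) * (tau \<theta> g ^^ (i+j)) P0 r)"
  proof -
    have "skew_mult \<theta> h f = (\<Sum>i<N. \<Sum>j<M. monom (coeff h i * (\<theta>^^i) (coeff f j)) (i+j))"
      by (intro skew_gen) (auto simp: coeff_eq_0 N_def M_def)
    then show ?thesis by (simp only: R_sum R_monom)
  qed
  also have "\<dots> = (\<Sum>i<N. coeff h i * (tau \<theta> g ^^ i) (Rv g f) r)"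
  proof (rule sum.cong[OF refl])
    fix i
    have Rf: "Rv g f = (\<lambda>r. \<Sum>j<M. coeff f j * (tau \<theta> g ^^ j) P0 r)" by (rule ext) (simp add: Rv_def M_def)
    show "(\<Sum>j<M. coeff h i * (\<theta>^^i) (coeff f j) * (tau \<theta> g ^^ (i+j)) P0 r) = coeff h i * (tau \<theta> g ^^ i) (Rv g f) r"
      unfolding Rf taupow_lin[OF finite_lessThan] by (simp add: funpow_add sum_distrib_left mult.assoc)
  qed
  finally show ?thesis by (simp add: N_def)
qed

lemma R_mult_zero: "Rv g f = (\<lambda>r. 0) \<Longrightarrow> Rv g (skew_mult \<theta> h f) r = 0"
  by (simp add: R_mult taupow_zero)

lemma coeff_vtp: "coeff (vec_to_poly c) i = (if i < length c then c!i else 0)"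
  by (simp add: vec_to_poly_def coeff_sum)

lemma R_vtp: "Rv g (vec_to_poly c) r = (\<Sum>i<length c. c!i * parity_matrix \<theta> g r i)"
  by (subst R_gen[of "length c"]) (auto simp: coeff_vtp parity_matrix_def)

context
  fixes g :: "'a poly"
  assumes lc: "lead_coeff g = 1" and dg: "degree g \<ge> 1"
begin

lemma tau_unit: "j < degree g \<Longrightarrow> tau \<theta> g (\<lambda>r. if r = j then 1 else 0) = (\<lambda>c. companion g j c)"
proof -
  have a: "\<theta> (if P then 1 else 0) = (if P then 1 else 0)" for P by (simp add: th_0 th_1)
  have b: "(if P then 1 else 0) * x = (if P then x else 0)" for P and x :: 'a by simp
  assume "j < degree g" then show ?thesis
    by (intro ext) (simp add: tau_def vec_mat_def a b comp_def)
qed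

lemma P0_iter: "j < degree g \<Longrightarrow> (tau \<theta> g ^^ j) P0 = (\<lambda>r. if r = j then 1 else 0)"
proof (induct j)
  case 0 then show ?case by (simp add: P0_def)
next
  case (Suc j)
  then show ?case by (auto simp: tau_unit companion_def Let_def)
qed

lemma P0_k: "(tau \<theta> g ^^ degree g) P0 = (\<lambda>c. if c < degree g then - coeff g c else 0)"
proof -
  obtain m where m: "degree g = Suc m" using dg by (cases "degree g") auto
  have "(tau \<theta> g ^^ degree g) P0 = tau \<theta> g ((tau \<theta> g ^^ m) P0)" by (simp add: m)
  also have "\<dots> = (\<lambda>c. companion g m c)" by (simp add: P0_iter m tau_unit)
  finally show ?thesis by (auto simp: companion_def Let_def m)
qed

lemma Rg0: "Rv g g = (\<lambda>r. 0)"
proof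
  fix r
  have "Rv g g r = (\<Sum>i<degree g. coeff g i * (tau \<theta> g ^^ i) P0 r) + coeff g (degree g) * (tau \<theta> g ^^ degree g) P0 r"
    by (simp add: Rv_def)
  also have "(\<Sum>i<degree g. coeff g i * (tau \<theta> g ^^ i) P0 r) = (\<Sum>i<degree g. if r = i then coeff g i else 0)"
    by (rule sum.cong) (auto simp: P0_iter)
  also have "\<dots> = (if r < degree g then coeff g r else 0)" by (simp add: sum.delta)
  finally show "Rv g g r = 0" using lc by (simp add: P0_k)
qed


lemma skew_monom: "skew_mult \<theta> (monom a m) g = (\<Sum>j<Suc (degree g). monom (a * (\<theta>^^m) (coeff g j)) (m+j))"
proof -
  have "skew_mult \<theta> (monom a m) g = (\<Sum>i<Suc m. \<Sum>j<Suc (degree g). monom (coeff (monom a m) i * (\<theta>^^i) (coeff g j)) (i+j))"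
    by (intro skew_gen) (auto simp: coeff_eq_0)
  also have "\<dots> = (\<Sum>j<Suc (degree g). monom (a * (\<theta>^^m) (coeff g j)) (m+j))"
    by (simp del: sum.lessThan_Suc add: lessThan_Suc sum.insert)
  finally show ?thesis .
qed

lemma coeff_skew_monom:
  assumes "m \<le> t"
  shows "coeff (skew_mult \<theta> (monom a m) g) t = a * (\<theta>^^m) (coeff g (t - m))"
proof -
  have "coeff (skew_mult \<theta> (monom a m) g) t = (\<Sum>j<Suc (degree g). if j = t - m then a * (\<theta>^^m) (coeff g j) else 0)"
    unfolding skew_monom coeff_sum by (rule sum.cong) (use assms in auto)
  also have "\<dots> = a * (\<theta>^^m) (coeff g (t - m))"
    by (auto simp: sum.delta coeff_eq_0 thp_0)
  finally show ?thesis .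
qed

lemma Rxn:
  assumes "right_divides \<theta> g f"
  shows "Rv g f = (\<lambda>r. 0)"
proof -
  obtain h where "f = skew_mult \<theta> h g" using assms by (auto simp: right_divides_def)
  then show ?thesis by (intro ext) (simp add: R_mult_zero Rg0)
qed

lemma decomp: "\<exists>h. p = skew_mult \<theta> h g + (\<Sum>j<degree g. monom (Rv g p j) j)"
proof (induct "degree p" arbitrary: p rule: less_induct)
  case less
  show ?case
  proof (cases "degree p < degree g")
    case True
    have R: "Rv g p j = coeff p j" if "j < degree g" for j
    proof -
      have "Rv g p j = (\<Sum>i<degree g. coeff p i * (tau \<theta> g ^^ i) P0 j)"
        by (rule R_gen) (use True in \<open>auto intro: coeff_eq_0\<close>)
      also have "\<dots> = (\<Sum>i<degree g. if i = j then coeff p i else 0)"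
        by (rule sum.cong) (auto simp: P0_iter)
      also have "\<dots> = coeff p j" using that by (simp add: sum.delta')
      finally show ?thesis .
    qed
    have "p = (\<Sum>j<degree g. monom (Rv g p j) j)"
    proof (rule poly_eqI)
      fix t
      show "coeff p t = coeff (\<Sum>j<degree g. monom (Rv g p j) j) t"
        using True by (auto simp: coeff_sum R sum.delta' coeff_eq_0)
    qed
    then show ?thesis by (intro exI[of _ 0]) (simp add: skew_zero)
  next
    case False
    define d where "d = degree p"
    define a where "a = lead_coeff p"
    define m where "m = d - degree g"
    define mg where "mg = skew_mult \<theta> (monom a m) g"
    define p' where "p' = p - mg"
    have "\<forall>t\<ge>d. coeff p' t = 0"
    proof (intro allI impI)
      fix t assume t: "d \<le> t"
      then have mt: "m \<le> t" by (simp add: m_def)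
      show "coeff p' t = 0"
      proof (cases "t = d")
        case True
        then have "t - m = degree g" using False by (simp add: m_def d_def)
        moreover have "coeff mg t = a * (\<theta>^^m) (coeff g (t - m))"
          unfolding mg_def by (rule coeff_skew_monom[OF mt])
        ultimately show ?thesis using True lc
          by (simp add: p'_def thp_1 a_def d_def)
      next
        case False2: False
        then have "t - m > degree g" "t > degree p" using t False by (auto simp: m_def d_def)
        then show ?thesis
          by (simp add: p'_def mg_def coeff_skew_monom[OF mt] thp_0 coeff_eq_0)
      qed
    qed
    moreover have "d > 0" using False dg by (simp add: d_def)
    ultimately have "degree p' < d" by (intro degree_lessI) auto
    then obtain h' where h': "p' = skew_mult \<theta> h' g + (\<Sum>j<degree g. monom (Rv g p' j) j)"
      using less by (auto simp: d_def)
    have Rp: "Rv g p j = Rv g p' j" for j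
    proof -
      have "p = p' + mg" by (simp add: p'_def)
      then have "Rv g p j = Rv g p' j + Rv g mg j" by (simp add: R_add)
      then show ?thesis by (simp add: mg_def R_mult_zero Rg0)
    qed
    have "p = skew_mult \<theta> (monom a m + h') g + (\<Sum>j<degree g. monom (Rv g p j) j)"
      unfolding skew_add_left Rp
      using h' by (simp add: p'_def mg_def algebra_simps)
    then show ?thesis by blast
  qed
qed

lemma code_eq:
  assumes "right_divides \<theta> g (xn_minus n \<alpha>)"
  shows "skew_cyclic_code \<theta> n \<alpha> g = code_of_parity n (degree g) (parity_matrix \<theta> g)"
proof (intro set_eqI iffI)
  fix c assume "c \<in> skew_cyclic_code \<theta> n \<alpha> g"
  then obtain h q where c: "length c = n" "vec_to_poly c = skew_mult \<theta> h g + skew_mult \<theta> q (xn_minus n \<alpha>)"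
    by (auto simp: skew_cyclic_code_def)
  have "(\<Sum>i<n. c ! i * parity_matrix \<theta> g r i) = 0" for r
  proof -
    have "(\<Sum>i<n. c ! i * parity_matrix \<theta> g r i) = Rv g (vec_to_poly c) r" using R_vtp[of g c r] c(1) by simp
    also have "\<dots> = 0" unfolding c by (simp add: R_add R_mult_zero Rg0 Rxn[OF assms])
    finally show ?thesis .
  qed
  then show "c \<in> code_of_parity n (degree g) (parity_matrix \<theta> g)" using c by (simp add: code_of_parity_def)
next
  fix c assume "c \<in> code_of_parity n (degree g) (parity_matrix \<theta> g)"
  then have c: "length c = n" "\<And>r. r < degree g \<Longrightarrow> Rv g (vec_to_poly c) r = 0"
    by (auto simp: code_of_parity_def R_vtp)
  obtain h where "vec_to_poly c = skew_mult \<theta> h g + (\<Sum>j<degree g. monom (Rv g (vec_to_poly c) j) j)"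
    using decomp by blast
  then have "vec_to_poly c = skew_mult \<theta> h g + skew_mult \<theta> 0 (xn_minus n \<alpha>)"
    by (simp add: c skew_zero)
  then show "c \<in> skew_cyclic_code \<theta> n \<alpha> g" using c by (auto simp: skew_cyclic_code_def)
qed

end
end

theorem mainTheorem6:
  fixes \<theta> :: "'a::{field,finite} \<Rightarrow> 'a" and \<alpha> :: 'a and g :: "'a poly"
    and n :: nat and C :: "'a list set"
  assumes "field_automorphism \<theta>"
    and "\<alpha> \<noteq> 0"
    and "lead_coeff g = 1" and "degree g \<ge> 1"
    and "right_divides \<theta> g (xn_minus n \<alpha>)"
    and "linear_code n C"
  shows "C = skew_cyclic_code \<theta> n \<alpha> g \<longleftrightarrow>
         C = code_of_parity n (degree g) (parity_matrix \<theta> g)"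
  using code_eq[OF assms(1,3,4,5)] by simp

end
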